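(* For every $i\in\mathcal L$ and $\epsilon>0$, $$\Pr\Big(\limsup_{t\to\infty}e^{\mathcal M}_i(t)>\epsilon\Big)\le\eta\,u_{\mathcal M}(\epsilon),\qquad u_{\mathcal M}(\epsilon)=\frac{L\min\{d_M,M\}}{2\epsilon}\,\xi,$$ where $$\xi=\frac{1}{e^{2E_{\mathcal M}^2}-1}-\frac{c(1+e^{-\gamma})}{e^{2E_{\mathcal M}^2}-e^{-\gamma}}+\frac{c^2e^{-\gamma}}{e^{2E_{\mathcal M}^2}-e^{-2\gamma}}.$$
   Context: Agents $\mathcal V=\{1,\dots,N\}$ communicate over a fixed graph $\mathcal G=(\mathcal V,\mathcal E)$; $(i,j)\in\mathcal E$ means $j$ can send data to $i$, and $\mathcal N_i=\{j\in\mathcal V:(i,j)\in\mathcal E\}$ (with $i\notin\mathcal N_i$). Legitimate agents are $\mathcal L=\{1,\dots,L\}$, malicious agents $\mathcal M=\{L+1,\dots,N\}$, $M=N-L$; $d_M=\max_{i\in\mathcal L}|\mathcal N_i|<N$. $x_i(t)\in\mathbb R$ is agent $i$'s state, $x^{\mathcal L}(t)\in\mathbb R^L$, $x^{\mathcal M}(t)\in\mathbb R^M$ the stacked states; malicious states evolve arbitrarily. State bound: $\max_{i\in\mathcal V,t\ge0}|x_i(t)|\le\eta$. Trust: for each $i\in\mathcal L$, $j\in\mathcal N_i$, $t\ge0$ an observation $\alpha_{ij}(t)\in[0,1]$ is available; for each pair the $\alpha_{ij}(t)$, $t\ge0$, are independent with a common mean, and $E_{\mathcal L}=\mathbb E[\alpha_{ij}]-1/2$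 if $j\in\mathcal L$, $E_{\mathcal M}=\mathbb E[\alpha_{ij}]-1/2$ if $j\in\mathcal M$; assume $E_{\mathcal L}>0$, $E_{\mathcal M}<0$. Let $\beta_{ij}(t)=\sum_{s=0}^t(\alpha_{ij}(s)-1/2)$ and $\mathcal N_i(t)=\{j\in\mathcal N_i:\beta_{ij}(t)\ge0\}$. Weights: $w_{ij}(t)=1/(|\mathcal N_i(t)|+1)$ if $j\in\mathcal N_i(t)$, $0$ if $j\notin\mathcal N_i(t)\cup\{i\}$, $w_{ii}(t)=1-\sum_{j\in\mathcal N_i}w_{ij}(t)$. Protocol for $i\in\mathcal L$, $t\ge0$: $x_i(t+1)=\lambda_t x_i(0)+(1-\lambda_t)\sum_{j\in\mathcal N_i\cup\{i\}}w_{ij}(t)x_j(t)$, with $\lambda_t=c\,e^{-\gamma t}$, $0<c<1$, $\gamma>0$. $W^{\mathcal L}_t=[w_{ij}(t)]_{i,j\in\mathcal L}$, $W^{\mathcal M}_t=[w_{ij}(t)]_{i\in\mathcal L,j\in\mathcal M}$. Ordered products $\prod_{k=a}^{b}A_k$ mean $A_bA_{b-1}\cdots A_a$ (identity if $b<a$). Malicious contribution: $x^{\mathcal L,\mathcal M}(t+1)=\sum_{k=0}^{t}\Big(\prod_{s=k+1}^{t}(1-\lambda_s)W^{\mathcal L}_s\Big)(1-\lambda_k)W^{\mathcal M}_k x^{\mathcal M}(k)$, and $e^{\mathcal M}_i(t)=|[x^{\mathcal L,\mathcal M}(t)]_i|$. *)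

theory Defs
  imports "HOL-Probability.Probability"
begin

text \<open>Agents are 1..N, legitimate agents 1..L, malicious agents L+1..N.
  Nb i is the in-neighbour set of agent i.  The trust observations are
  alpha i j t omega, malicious states xM j t omega (arbitrary random processes).\<close>

definition lam :: "real \<Rightarrow> real \<Rightarrow> nat \<Rightarrow> real" where
  "lam c \<gamma> t = c * exp (- \<gamma> * real t)"

definition beta :: "(nat \<Rightarrow> nat \<Rightarrow> nat \<Rightarrow> 'a \<Rightarrow> real) \<Rightarrow> nat \<Rightarrow> nat \<Rightarrow> nat \<Rightarrow> 'a \<Rightarrow> real" where
  "beta \<alpha> i j t \<omega> = (\<Sum>s\<le>t. \<alpha> i j s \<omega> - 1/2)"

definition trusted :: "(nat \<Rightarrow> nat set) \<Rightarrow> (nat \<Rightarrow> nat \<Rightarrow> nat \<Rightarrow> 'a \<Rightarrow> real) \<Rightarrow> nat \<Rightarrow> nat \<Rightarrow> 'a \<Rightarrow> nat set" where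
  "trusted Nb \<alpha> i t \<omega> = {j \<in> Nb i. beta \<alpha> i j t \<omega> \<ge> 0}"

definition woff :: "(nat \<Rightarrow> nat set) \<Rightarrow> (nat \<Rightarrow> nat \<Rightarrow> nat \<Rightarrow> 'a \<Rightarrow> real) \<Rightarrow> nat \<Rightarrow> nat \<Rightarrow> nat \<Rightarrow> 'a \<Rightarrow> real" where
  "woff Nb \<alpha> i j t \<omega> =
     (if j \<in> trusted Nb \<alpha> i t \<omega> then 1 / (real (card (trusted Nb \<alpha> i t \<omega>)) + 1) else 0)"

definition wgt :: "(nat \<Rightarrow> nat set) \<Rightarrow> (nat \<Rightarrow> nat \<Rightarrow> nat \<Rightarrow> 'a \<Rightarrow> real) \<Rightarrow> nat \<Rightarrow> nat \<Rightarrow> nat \<Rightarrow> 'a \<Rightarrow> real" where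
  "wgt Nb \<alpha> i j t \<omega> =
     (if j = i then 1 - (\<Sum>k\<in>Nb i. woff Nb \<alpha> i k t \<omega>) else woff Nb \<alpha> i j t \<omega>)"

primrec legst :: "(nat \<Rightarrow> nat set) \<Rightarrow> nat \<Rightarrow> (nat \<Rightarrow> nat \<Rightarrow> nat \<Rightarrow> 'a \<Rightarrow> real) \<Rightarrow>
    (nat \<Rightarrow> nat \<Rightarrow> 'a \<Rightarrow> real) \<Rightarrow> (nat \<Rightarrow> real) \<Rightarrow> real \<Rightarrow> real \<Rightarrow> nat \<Rightarrow> 'a \<Rightarrow> nat \<Rightarrow> real" where
  "legst Nb L \<alpha> xM x0 c \<gamma> 0 = (\<lambda>\<omega> i. x0 i)"
| "legst Nb L \<alpha> xM x0 c \<gamma> (Suc t) = (\<lambda>\<omega> i.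
     lam c \<gamma> t * x0 i + (1 - lam c \<gamma> t) *
       (\<Sum>j\<in>Nb i \<union> {i}. wgt Nb \<alpha> i j t \<omega> *
          (if j \<le> L then legst Nb L \<alpha> xM x0 c \<gamma> t \<omega> j else xM j t \<omega>)))"

definition state :: "(nat \<Rightarrow> nat set) \<Rightarrow> nat \<Rightarrow> (nat \<Rightarrow> nat \<Rightarrow> nat \<Rightarrow> 'a \<Rightarrow> real) \<Rightarrow>
    (nat \<Rightarrow> nat \<Rightarrow> 'a \<Rightarrow> real) \<Rightarrow> (nat \<Rightarrow> real) \<Rightarrow> real \<Rightarrow> real \<Rightarrow> nat \<Rightarrow> nat \<Rightarrow> 'a \<Rightarrow> real" where
  "state Nb L \<alpha> xM x0 c \<gamma> k t \<omega> =
     (if k \<le> L then legst Nb L \<alpha> xM x0 c \<gamma> t \<omega> k else xM k t \<omega>)"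

text \<open>L x L matrices as functions on indices 1..L.\<close>
definition matmul :: "nat \<Rightarrow> (nat \<Rightarrow> nat \<Rightarrow> real) \<Rightarrow> (nat \<Rightarrow> nat \<Rightarrow> real) \<Rightarrow> nat \<Rightarrow> nat \<Rightarrow> real" where
  "matmul L A B = (\<lambda>i j. \<Sum>l\<in>{1..L}. A i l * B l j)"

definition idm :: "nat \<Rightarrow> nat \<Rightarrow> real" where
  "idm = (\<lambda>i j. if i = j then 1 else 0)"

text \<open>Ordered product: ordprod L A a b = A_b A_(b-1) ... A_a (identity if b < a).\<close>
primrec ordprod :: "nat \<Rightarrow> (nat \<Rightarrow> nat \<Rightarrow> nat \<Rightarrow> real) \<Rightarrow> nat \<Rightarrow> nat \<Rightarrow> nat \<Rightarrow> nat \<Rightarrow> real" where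
  "ordprod L A a 0 = (if a = 0 then A 0 else idm)"
| "ordprod L A a (Suc b) = (if a \<le> Suc b then matmul L (A (Suc b)) (ordprod L A a b) else idm)"

definition xLM :: "(nat \<Rightarrow> nat set) \<Rightarrow> nat \<Rightarrow> nat \<Rightarrow> (nat \<Rightarrow> nat \<Rightarrow> nat \<Rightarrow> 'a \<Rightarrow> real) \<Rightarrow>
    (nat \<Rightarrow> nat \<Rightarrow> 'a \<Rightarrow> real) \<Rightarrow> real \<Rightarrow> real \<Rightarrow> nat \<Rightarrow> 'a \<Rightarrow> nat \<Rightarrow> real" where
  "xLM Nb L N \<alpha> xM c \<gamma> t \<omega> i =
     (case t of 0 \<Rightarrow> 0
      | Suc t' \<Rightarrow> (\<Sum>k\<le>t'. \<Sum>l\<in>{1..L}.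
          ordprod L (\<lambda>s p q. (1 - lam c \<gamma> s) * wgt Nb \<alpha> p q s \<omega>) (Suc k) t' i l *
          ((1 - lam c \<gamma> k) * (\<Sum>j\<in>{L+1..N}. wgt Nb \<alpha> l j k \<omega> * xM j k \<omega>))))"

definition eM :: "(nat \<Rightarrow> nat set) \<Rightarrow> nat \<Rightarrow> nat \<Rightarrow> (nat \<Rightarrow> nat \<Rightarrow> nat \<Rightarrow> 'a \<Rightarrow> real) \<Rightarrow>
    (nat \<Rightarrow> nat \<Rightarrow> 'a \<Rightarrow> real) \<Rightarrow> real \<Rightarrow> real \<Rightarrow> nat \<Rightarrow> nat \<Rightarrow> 'a \<Rightarrow> real" where
  "eM Nb L N \<alpha> xM c \<gamma> i t \<omega> = \<bar>xLM Nb L N \<alpha> xM c \<gamma> t \<omega> i\<bar>"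

definition dM :: "(nat \<Rightarrow> nat set) \<Rightarrow> nat \<Rightarrow> nat" where
  "dM Nb L = Max ((\<lambda>i. card (Nb i)) ` {1..L})"

definition xi :: "real \<Rightarrow> real \<Rightarrow> real \<Rightarrow> real" where
  "xi c \<gamma> EM = 1 / (exp (2 * EM\<^sup>2) - 1)
     - c * (1 + exp (- \<gamma>)) / (exp (2 * EM\<^sup>2) - exp (- \<gamma>))
     + c\<^sup>2 * exp (- \<gamma>) / (exp (2 * EM\<^sup>2) - exp (- 2 * \<gamma>))"

definition uM :: "(nat \<Rightarrow> nat set) \<Rightarrow> nat \<Rightarrow> nat \<Rightarrow> real \<Rightarrow> real \<Rightarrow> real \<Rightarrow> real \<Rightarrow> real" where
  "uM Nb L N c \<gamma> EM \<epsilon> = real L * real (min (dM Nb L) (N - L)) / (2 * \<epsilon>) * xi c \<gamma> EM"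

end

theory Submission
  imports Defs
begin

lemma woff_sum:
  assumes fin: "finite A" and finT: "finite (trusted Nb \<alpha> l s \<omega>)"
  shows "(\<Sum>q\<in>A. woff Nb \<alpha> l q s \<omega>) = real (card (A \<inter> trusted Nb \<alpha> l s \<omega>)) / (real (card (trusted Nb \<alpha> l s \<omega>)) + 1)"
proof -
  have "(\<Sum>q\<in>A. woff Nb \<alpha> l q s \<omega>) = (\<Sum>q\<in>A \<inter> trusted Nb \<alpha> l s \<omega>. 1 / (real (card (trusted Nb \<alpha> l s \<omega>)) + 1))"
    unfolding woff_def using sum.inter_restrict[OF fin, of "\<lambda>_. 1 / (real (card (trusted Nb \<alpha> l s \<omega>)) + 1)" "trusted Nb \<alpha> l s \<omega>"] by simp
  thus ?thesis by simp
qed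

lemma trusted_sub: "trusted Nb \<alpha> l s \<omega> \<subseteq> Nb l" by (auto simp: trusted_def)

lemma wgt_facts:
  assumes finN: "finite (Nb l)" and l: "l \<in> {1..L}"
  shows "\<forall>q\<in>{1..L}. 0 \<le> wgt Nb \<alpha> l q s \<omega>"
    and "(\<Sum>q\<in>{1..L}. wgt Nb \<alpha> l q s \<omega>) \<le> 1"
proof -
  define T where "T = trusted Nb \<alpha> l s \<omega>"
  have TN: "T \<subseteq> Nb l" unfolding T_def by (rule trusted_sub)
  have finT: "finite T" using TN finN finite_subset by blast
  have wll: "wgt Nb \<alpha> l l s \<omega> = 1 - real (card T) / (real (card T) + 1)"
    unfolding wgt_def using woff_sum[OF finN finT[unfolded T_def]] TN
    by (simp add: T_def Int_absorb1)
  have wll0: "0 \<le> wgt Nb \<alpha> l l s \<omega>" unfolding wll by (simp add: field_simps)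
  show "\<forall>q\<in>{1..L}. 0 \<le> wgt Nb \<alpha> l q s \<omega>"
    using wll0 by (auto simp: wgt_def woff_def)
  have "(\<Sum>q\<in>{1..L}. wgt Nb \<alpha> l q s \<omega>) = wgt Nb \<alpha> l l s \<omega> + (\<Sum>q\<in>{1..L}-{l}. wgt Nb \<alpha> l q s \<omega>)"
    using l by (simp add: sum.remove)
  also have "(\<Sum>q\<in>{1..L}-{l}. wgt Nb \<alpha> l q s \<omega>) = (\<Sum>q\<in>{1..L}-{l}. woff Nb \<alpha> l q s \<omega>)"
    by (intro sum.cong) (auto simp: wgt_def)
  also have "\<dots> = real (card (({1..L}-{l}) \<inter> T)) / (real (card T) + 1)"
    using woff_sum[of "{1..L}-{l}", OF _ finT[unfolded T_def]] by (simp add: T_def)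
  also have "\<dots> \<le> real (card T) / (real (card T) + 1)"
    using finT by (intro divide_right_mono) (auto intro: card_mono)
  finally show "(\<Sum>q\<in>{1..L}. wgt Nb \<alpha> l q s \<omega>) \<le> 1" unfolding wll by simp
qed

lemma woff_mal:
  assumes finN: "finite (Nb l)"
  shows "0 \<le> woff Nb \<alpha> l j k \<omega>"
    and "woff Nb \<alpha> l j k \<omega> \<le> (if j \<in> Nb l \<and> 0 \<le> beta \<alpha> l j k \<omega> then 1/2 else 0)"
proof -
  define T where "T = trusted Nb \<alpha> l k \<omega>"
  have TN: "T \<subseteq> Nb l" unfolding T_def by (rule trusted_sub)
  have finT: "finite T" using TN finN finite_subset by blast
  show "0 \<le> woff Nb \<alpha> l j k \<omega>" by (simp add: woff_def)
  show "woff Nb \<alpha> l j k \<omega> \<le> (if j \<in> Nb l \<and> 0 \<le> beta \<alpha> l j k \<omega> then 1/2 else 0)"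
  proof (cases "j \<in> T")
    case True
    then have "card T \<ge> 1" using finT by (metis One_nat_def Suc_leI card_gt_0_iff empty_iff)
    hence "1 / (real (card T) + 1) \<le> 1/2" by (simp add: field_simps)
    moreover have "j \<in> Nb l \<and> 0 \<le> beta \<alpha> l j k \<omega>" using True by (simp add: T_def trusted_def)
    ultimately show ?thesis using True by (simp add: woff_def T_def)
  next
    case False then show ?thesis by (simp add: woff_def T_def)
  qed
qed

lemma ordprod_bound:
  fixes A :: "nat \<Rightarrow> nat \<Rightarrow> nat \<Rightarrow> real" and r :: "nat \<Rightarrow> real"
  assumes nonneg: "\<And>s p q. p\<in>{1..L} \<Longrightarrow> q\<in>{1..L} \<Longrightarrow> 0 \<le> A s p q"
    and rows: "\<And>s p. p\<in>{1..L} \<Longrightarrow> (\<Sum>q\<in>{1..L}. A s p q) \<le> r s"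
    and r0: "\<And>s. 0 \<le> r s" and r1: "\<And>s. r s \<le> 1"
  shows "\<forall>p\<in>{1..L}. (\<forall>q\<in>{1..L}. 0 \<le> ordprod L A a b p q) \<and>
           (\<Sum>q\<in>{1..L}. ordprod L A a b p q) \<le> (if a \<le> b then r a else 1)"
proof (induction b)
  case 0
  show ?case
  proof (cases "a = 0")
    case True then show ?thesis using nonneg rows by simp
  next
    case False then show ?thesis by (simp add: idm_def)
  qed
next
  case (Suc b)
  show ?case
  proof (cases "a \<le> Suc b")
    case False then show ?thesis by (simp add: idm_def)
  next
    case True
    define R where "R = (if a \<le> b then r a else 1)"
    have R0: "0 \<le> R" "R \<le> 1" using r0 r1 by (auto simp: R_def)
    show ?thesis
    proof
      fix p assume p: "p \<in> {1..L}"
      have ent: "\<forall>q\<in>{1..L}. 0 \<le> ordprod L A a (Suc b) p q"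
        using True Suc.IH p nonneg by (auto simp: matmul_def intro!: sum_nonneg mult_nonneg_nonneg)
      have "(\<Sum>q\<in>{1..L}. ordprod L A a (Suc b) p q)
          = (\<Sum>l\<in>{1..L}. A (Suc b) p l * (\<Sum>q\<in>{1..L}. ordprod L A a b l q))"
        using True by (simp add: matmul_def sum_distrib_left) (rule sum.swap)
      also have "\<dots> \<le> (\<Sum>l\<in>{1..L}. A (Suc b) p l * R)"
        using Suc.IH p nonneg unfolding R_def by (intro sum_mono mult_left_mono) auto
      also have "\<dots> = (\<Sum>l\<in>{1..L}. A (Suc b) p l) * R" by (simp add: sum_distrib_right)
      also have "\<dots> \<le> r (Suc b) * R" using rows[OF p] R0 by (intro mult_right_mono) auto
      also have "\<dots> \<le> (if a \<le> Suc b then r a else 1)"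
      proof (cases "a \<le> b")
        case True then show ?thesis using r0 r1 by (simp add: R_def mult_left_le_one_le)
      next
        case False then have "a = Suc b" using \<open>a \<le> Suc b\<close> by simp
        then show ?thesis using False by (simp add: R_def)
      qed
      finally show "(\<forall>q\<in>{1..L}. 0 \<le> ordprod L A a (Suc b) p q) \<and>
           (\<Sum>q\<in>{1..L}. ordprod L A a (Suc b) p q) \<le> (if a \<le> Suc b then r a else 1)"
        using ent by simp
    qed
  qed
qed


definition Yv :: "(nat \<Rightarrow> nat set) \<Rightarrow> nat \<Rightarrow> nat \<Rightarrow> (nat \<Rightarrow> nat \<Rightarrow> nat \<Rightarrow> 'a \<Rightarrow> real) \<Rightarrow> nat \<Rightarrow> 'a \<Rightarrow> real" where
  "Yv Nb L N \<alpha> k \<omega> = (\<Sum>l\<in>{1..L}. \<Sum>j\<in>{L+1..N}. if j \<in> Nb l \<and> 0 \<le> beta \<alpha> l j k \<omega> then 1/2 else 0)"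

lemma lam_bounds:
  assumes "0 < c" "c < 1" "0 \<le> \<gamma>"
  shows "0 \<le> lam c \<gamma> s" "lam c \<gamma> s \<le> c"
proof -
  have "exp (- \<gamma> * real s) \<le> 1" using assms by simp
  thus "0 \<le> lam c \<gamma> s" "lam c \<gamma> s \<le> c" using assms by (auto simp: lam_def mult_left_le)
qed

lemma det_bound:
  fixes \<alpha> :: "nat \<Rightarrow> nat \<Rightarrow> nat \<Rightarrow> 'a \<Rightarrow> real" and \<omega> :: 'a
  assumes finN: "\<forall>l\<in>{1..L}. finite (Nb l)"
    and c: "0 < c" "c < 1" and \<gamma>: "0 \<le> \<gamma>"
    and xb: "\<forall>j\<in>{L+1..N}. \<forall>k. \<bar>xM j k \<omega>\<bar> \<le> \<eta>" and \<eta>: "0 \<le> \<eta>"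
    and i: "i \<in> {1..L}"
  shows "eM Nb L N \<alpha> xM c \<gamma> i (Suc t) \<omega> \<le>
     \<eta> * ((\<Sum>k<t. (1 - lam c \<gamma> k) * (1 - lam c \<gamma> (Suc k)) * Yv Nb L N \<alpha> k \<omega>) + Yv Nb L N \<alpha> t \<omega>)"
proof -
  note lb = lam_bounds[OF c \<gamma>]
  have l1: "0 \<le> 1 - lam c \<gamma> s" "1 - lam c \<gamma> s \<le> 1" for s using lb[of s] c by auto
  define A where "A = (\<lambda>s p q. (1 - lam c \<gamma> s) * wgt Nb \<alpha> p q s \<omega>)"
  have OB: "\<forall>p\<in>{1..L}. (\<forall>q\<in>{1..L}. 0 \<le> ordprod L A a b p q) \<and>
           (\<Sum>q\<in>{1..L}. ordprod L A a b p q) \<le> (if a \<le> b then 1 - lam c \<gamma> a else 1)" for a b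
  proof (rule ordprod_bound)
    show "0 \<le> A s p q" if "p\<in>{1..L}" "q\<in>{1..L}" for s p q
      using wgt_facts(1)[of Nb p L \<alpha> s \<omega>] finN that l1 unfolding A_def by (auto intro: mult_nonneg_nonneg)
    show "(\<Sum>q\<in>{1..L}. A s p q) \<le> 1 - lam c \<gamma> s" if "p\<in>{1..L}" for s p
    proof -
      have "(\<Sum>q\<in>{1..L}. A s p q) = (1 - lam c \<gamma> s) * (\<Sum>q\<in>{1..L}. wgt Nb \<alpha> p q s \<omega>)"
        unfolding A_def by (simp add: sum_distrib_left)
      also have "\<dots> \<le> (1 - lam c \<gamma> s) * 1"
        using wgt_facts(2)[of Nb p L \<alpha> s \<omega>] finN that l1 by (intro mult_left_mono) auto
      finally show ?thesis by simp
    qed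
    show "0 \<le> 1 - lam c \<gamma> s" "1 - lam c \<gamma> s \<le> 1" for s using l1 by auto
  qed
  have ent: "0 \<le> ordprod L A a b p q \<and> ordprod L A a b p q \<le> (if a \<le> b then 1 - lam c \<gamma> a else 1)"
    if "p\<in>{1..L}" "q\<in>{1..L}" for a b p q
  proof -
    have "ordprod L A a b p q \<le> (\<Sum>q\<in>{1..L}. ordprod L A a b p q)"
      using OB[of a b] that by (intro member_le_sum) auto
    thus ?thesis using OB[of a b] that by fastforce
  qed
  define y where "y k l = (\<Sum>j\<in>{L+1..N}. if j \<in> Nb l \<and> 0 \<le> beta \<alpha> l j k \<omega> then 1/2 else 0::real)" for k l
  have y0: "0 \<le> y k l" for k l unfolding y_def by (intro sum_nonneg) auto
  have my: "\<bar>\<Sum>j\<in>{L+1..N}. wgt Nb \<alpha> l j k \<omega> * xM j k \<omega>\<bar> \<le> \<eta> * y k l" if l: "l \<in> {1..L}" for k l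
  proof -
    have "\<bar>\<Sum>j\<in>{L+1..N}. wgt Nb \<alpha> l j k \<omega> * xM j k \<omega>\<bar> \<le> (\<Sum>j\<in>{L+1..N}. \<bar>wgt Nb \<alpha> l j k \<omega> * xM j k \<omega>\<bar>)"
      by (rule sum_abs)
    also have "\<dots> \<le> (\<Sum>j\<in>{L+1..N}. \<eta> * (if j \<in> Nb l \<and> 0 \<le> beta \<alpha> l j k \<omega> then 1/2 else 0))"
    proof (rule sum_mono)
      fix j assume j: "j \<in> {L+1..N}"
      have jl: "j \<noteq> l" using j l by auto
      have fl: "finite (Nb l)" using finN l by auto
      have "\<bar>wgt Nb \<alpha> l j k \<omega> * xM j k \<omega>\<bar> = woff Nb \<alpha> l j k \<omega> * \<bar>xM j k \<omega>\<bar>"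
        using jl woff_mal(1)[where Nb=Nb and l=l and \<alpha>=\<alpha> and j=j and k=k and \<omega>=\<omega>, OF fl] by (simp add: wgt_def abs_mult)
      also have "\<dots> \<le> (if j \<in> Nb l \<and> 0 \<le> beta \<alpha> l j k \<omega> then 1/2 else 0) * \<eta>"
        using woff_mal[where Nb=Nb and l=l and \<alpha>=\<alpha> and j=j and k=k and \<omega>=\<omega>, OF fl] xb j by (intro mult_mono) auto
      finally show "\<bar>wgt Nb \<alpha> l j k \<omega> * xM j k \<omega>\<bar> \<le> \<eta> * (if j \<in> Nb l \<and> 0 \<le> beta \<alpha> l j k \<omega> then 1/2 else 0)"
        by (simp add: mult.commute)
    qed
    also have "\<dots> = \<eta> * y k l" unfolding y_def by (simp add: sum_distrib_left)
    finally show ?thesis .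
  qed
  define R where "R k = (if Suc k \<le> t then 1 - lam c \<gamma> (Suc k) else 1)" for k
  have YY: "Yv Nb L N \<alpha> k \<omega> = (\<Sum>l\<in>{1..L}. y k l)" for k unfolding Yv_def y_def by simp
  have "eM Nb L N \<alpha> xM c \<gamma> i (Suc t) \<omega> = \<bar>\<Sum>k\<le>t. \<Sum>l\<in>{1..L}. ordprod L A (Suc k) t i l *
          ((1 - lam c \<gamma> k) * (\<Sum>j\<in>{L+1..N}. wgt Nb \<alpha> l j k \<omega> * xM j k \<omega>))\<bar>"
    unfolding eM_def xLM_def A_def by simp
  also have "\<dots> \<le> (\<Sum>k\<le>t. \<Sum>l\<in>{1..L}. \<bar>ordprod L A (Suc k) t i l *
          ((1 - lam c \<gamma> k) * (\<Sum>j\<in>{L+1..N}. wgt Nb \<alpha> l j k \<omega> * xM j k \<omega>))\<bar>)"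
    by (rule order.trans[OF sum_abs]) (intro sum_mono sum_abs)
  also have "\<dots> \<le> (\<Sum>k\<le>t. \<Sum>l\<in>{1..L}. R k * ((1 - lam c \<gamma> k) * (\<eta> * y k l)))"
  proof (intro sum_mono)
    fix k l assume l: "l \<in> {1..L}"
    have e: "0 \<le> ordprod L A (Suc k) t i l" "ordprod L A (Suc k) t i l \<le> R k"
      using ent[OF i l, of "Suc k" t] by (auto simp: R_def)
    have "\<bar>ordprod L A (Suc k) t i l * ((1 - lam c \<gamma> k) * (\<Sum>j\<in>{L+1..N}. wgt Nb \<alpha> l j k \<omega> * xM j k \<omega>))\<bar>
       = ordprod L A (Suc k) t i l * ((1 - lam c \<gamma> k) * \<bar>\<Sum>j\<in>{L+1..N}. wgt Nb \<alpha> l j k \<omega> * xM j k \<omega>\<bar>)"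
      using e(1) l1[of k] by (simp add: abs_mult)
    also have "\<dots> \<le> R k * ((1 - lam c \<gamma> k) * (\<eta> * y k l))"
      using e l1[of k] my[OF l, of k] \<eta> y0[of k l]
      by (intro mult_mono mult_left_mono) (auto intro: mult_nonneg_nonneg)
    finally show "\<bar>ordprod L A (Suc k) t i l * ((1 - lam c \<gamma> k) * (\<Sum>j\<in>{L+1..N}. wgt Nb \<alpha> l j k \<omega> * xM j k \<omega>))\<bar>
       \<le> R k * ((1 - lam c \<gamma> k) * (\<eta> * y k l))" .
  qed
  also have "\<dots> = (\<Sum>k\<le>t. \<eta> * (R k * (1 - lam c \<gamma> k) * Yv Nb L N \<alpha> k \<omega>))"
    unfolding YY by (simp add: sum_distrib_left mult_ac)
  also have "\<dots> = (\<Sum>k<t. \<eta> * (R k * (1 - lam c \<gamma> k) * Yv Nb L N \<alpha> k \<omega>)) + \<eta> * (R t * (1 - lam c \<gamma> t) * Yv Nb L N \<alpha> t \<omega>)"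
    by (simp add: lessThan_Suc_atMost[symmetric])
  also have "\<dots> \<le> (\<Sum>k<t. \<eta> * ((1 - lam c \<gamma> k) * (1 - lam c \<gamma> (Suc k)) * Yv Nb L N \<alpha> k \<omega>)) + \<eta> * Yv Nb L N \<alpha> t \<omega>"
  proof -
    have Y0: "0 \<le> Yv Nb L N \<alpha> t \<omega>" unfolding YY using y0 by (intro sum_nonneg) auto
    have "\<eta> * (R t * (1 - lam c \<gamma> t) * Yv Nb L N \<alpha> t \<omega>) \<le> \<eta> * (1 * Yv Nb L N \<alpha> t \<omega>)"
      using l1[of t] Y0 \<eta> by (intro mult_left_mono mult_right_mono) (auto simp: R_def)
    moreover have "(\<Sum>k<t. \<eta> * (R k * (1 - lam c \<gamma> k) * Yv Nb L N \<alpha> k \<omega>)) =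
        (\<Sum>k<t. \<eta> * ((1 - lam c \<gamma> k) * (1 - lam c \<gamma> (Suc k)) * Yv Nb L N \<alpha> k \<omega>))"
      by (intro sum.cong) (auto simp: R_def)
    ultimately show ?thesis by simp
  qed
  also have "\<dots> = \<eta> * ((\<Sum>k<t. (1 - lam c \<gamma> k) * (1 - lam c \<gamma> (Suc k)) * Yv Nb L N \<alpha> k \<omega>) + Yv Nb L N \<alpha> t \<omega>)"
    by (simp add: sum_distrib_left distrib_left)
  finally show ?thesis .
qed


lemma hoeff_beta:
  fixes P :: "'a measure" and X :: "nat \<Rightarrow> 'a \<Rightarrow> real"
  assumes ps: "prob_space P"
    and meas: "\<And>t. X t \<in> borel_measurable P"
    and bnd: "\<And>t \<omega>. \<omega> \<in> space P \<Longrightarrow> 0 \<le> X t \<omega> \<and> X t \<omega> \<le> 1"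
    and ind: "prob_space.indep_vars P (\<lambda>_. borel) X UNIV"
    and mean: "\<And>t. integral\<^sup>L P (X t) - 1/2 = EM"
    and EM: "EM < 0"
  shows "measure P {\<omega> \<in> space P. 0 \<le> (\<Sum>s\<le>k. X s \<omega> - 1/2)} \<le> exp (- 2 * EM\<^sup>2 * real (Suc k))"
proof -
  interpret prob_space P by (rule ps)
  interpret H: Hoeffding_ineq P "{..k}" X "\<lambda>_. 0" "\<lambda>_. 1" "\<Sum>i\<in>{..k}. expectation (X i)"
  proof unfold_locales
    show "finite {..k}" by simp
    show "indep_vars (\<lambda>_. borel) X {..k}" using indep_vars_subset[OF ind] by simp
    show "AE x in P. X i x \<in> {0..1}" for i using bnd by (intro AE_I2) auto
  qed simp
  define \<epsilon> where "\<epsilon> = - (real (Suc k) * EM)"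
  have \<epsilon>0: "\<epsilon> \<ge> 0" using EM unfolding \<epsilon>_def by (intro iffD2[OF neg_0_le_iff_le] mult_nonneg_nonpos) auto
  have mu: "(\<Sum>i\<in>{..k}. expectation (X i)) = real (Suc k) * (EM + 1/2)"
  proof -
    have "expectation (X i) = EM + 1/2" for i using mean[of i] by simp
    thus ?thesis by simp
  qed
  have "{\<omega> \<in> space P. 0 \<le> (\<Sum>s\<le>k. X s \<omega> - 1/2)} =
        {x\<in>space P. (\<Sum>i\<in>{..k}. X i x) \<ge> (\<Sum>i\<in>{..k}. expectation (X i)) + \<epsilon>}"
    unfolding mu \<epsilon>_def by (auto simp: sum_subtractf algebra_simps)
  also have "prob \<dots> \<le> exp (-2 * \<epsilon>\<^sup>2 / (\<Sum>i\<in>{..k}. ((1::real) - 0)\<^sup>2))"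
    by (rule H.Hoeffding_ineq_ge[OF \<epsilon>0]) simp
  also have "-2 * \<epsilon>\<^sup>2 / (\<Sum>i\<in>{..k}. ((1::real) - 0)\<^sup>2) = - 2 * EM\<^sup>2 * real (Suc k)"
    unfolding \<epsilon>_def by (simp add: power2_eq_square field_simps)
  finally show ?thesis .
qed



lemma Y_integral:
  fixes P :: "'a measure"
  assumes ps: "prob_space P"
    and Nb: "\<forall>k\<in>{1..N}. Nb k \<subseteq> {1..N} \<and> k \<notin> Nb k" and LN: "L \<le> N"
    and bnd: "\<forall>k\<in>{1..L}. \<forall>j\<in>Nb k. \<forall>t. \<forall>\<omega>\<in>space P. 0 \<le> \<alpha> k j t \<omega> \<and> \<alpha> k j t \<omega> \<le> 1"
    and meas: "\<forall>k\<in>{1..L}. \<forall>j\<in>Nb k. \<forall>t. \<alpha> k j t \<in> borel_measurable P"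
    and ind: "\<forall>k\<in>{1..L}. \<forall>j\<in>Nb k. prob_space.indep_vars P (\<lambda>_. borel) (\<lambda>t. \<alpha> k j t) UNIV"
    and mean: "\<forall>k\<in>{1..L}. \<forall>j\<in>Nb k. \<forall>t. L < j \<longrightarrow> integral\<^sup>L P (\<alpha> k j t) - 1/2 = EM"
    and EM: "EM < 0"
  shows "Yv Nb L N \<alpha> k \<in> borel_measurable P"
    and "(\<integral>\<^sup>+\<omega>. ennreal (Yv Nb L N \<alpha> k \<omega>) \<partial>P) \<le>
          ennreal (real L * real (min (dM Nb L) (N - L)) / 2 * exp (- 2 * EM\<^sup>2 * real (Suc k)))"
proof -
  interpret prob_space P by (rule ps)
  define e where "e = exp (- 2 * EM\<^sup>2 * real (Suc k))"
  define g where "g l j \<omega> = (if j \<in> Nb l \<and> 0 \<le> beta \<alpha> l j k \<omega> then 1/2 else 0::real)" for l j \<omega>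
  define h where "h l j = (if j \<in> Nb l then e / 2 else 0)" for l j
  have g0: "0 \<le> g l j \<omega>" for l j \<omega> by (simp add: g_def)
  have bm: "beta \<alpha> l j k \<in> borel_measurable P" if "l \<in> {1..L}" "j \<in> Nb l" for l j
  proof -
    have "(\<lambda>\<omega>. \<Sum>s\<le>k. \<alpha> l j s \<omega> - 1/2) \<in> borel_measurable P"
      using meas that by (intro borel_measurable_sum borel_measurable_diff) auto
    thus ?thesis by (simp add: beta_def[abs_def])
  qed
  have Bs: "{\<omega>\<in>space P. 0 \<le> beta \<alpha> l j k \<omega>} \<in> sets P" if "l \<in> {1..L}" "j \<in> Nb l" for l j
  proof -
    have [measurable]: "beta \<alpha> l j k \<in> borel_measurable P" by (rule bm[OF that])
    show ?thesis by measurable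
  qed
  have gm: "g l j \<in> borel_measurable P" if "l \<in> {1..L}" for l j
  proof (cases "j \<in> Nb l")
    case True
    have [measurable]: "beta \<alpha> l j k \<in> borel_measurable P" by (rule bm[OF that True])
    have "g l j = (\<lambda>\<omega>. if 0 \<le> beta \<alpha> l j k \<omega> then 1/2 else 0)" using True by (simp add: g_def[abs_def])
    also have "\<dots> \<in> borel_measurable P" by measurable
    finally show ?thesis .
  next
    case False
    then have "g l j = (\<lambda>_. 0)" by (simp add: g_def[abs_def])
    thus ?thesis by simp
  qed
  have YY: "Yv Nb L N \<alpha> k = (\<lambda>\<omega>. \<Sum>l\<in>{1..L}. \<Sum>j\<in>{L+1..N}. g l j \<omega>)"
    by (simp add: Yv_def g_def[abs_def] fun_eq_iff)
  show "Yv Nb L N \<alpha> k \<in> borel_measurable P"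
    unfolding YY using gm by (intro borel_measurable_sum) auto
  have gi: "(\<integral>\<^sup>+\<omega>. ennreal (g l j \<omega>) \<partial>P) \<le> ennreal (h l j)" if l: "l \<in> {1..L}" and j: "j \<in> {L+1..N}" for l j
  proof (cases "j \<in> Nb l")
    case True
    define B where "B = {\<omega>\<in>space P. 0 \<le> beta \<alpha> l j k \<omega>}"
    have B: "B \<in> sets P" unfolding B_def by (rule Bs[OF l True])
    have pB: "prob B \<le> e" unfolding B_def e_def beta_def
      by (rule hoeff_beta[OF ps, of "\<alpha> l j"]) (use meas bnd ind mean l True j EM in auto)
    have "(\<integral>\<^sup>+\<omega>. ennreal (g l j \<omega>) \<partial>P) = (\<integral>\<^sup>+\<omega>. ennreal (1/2) * indicator B \<omega> \<partial>P)"
      by (intro nn_integral_cong) (auto simp: g_def B_def True split: split_indicator)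
    also have "\<dots> = ennreal (1/2) * emeasure P B" using B by (rule nn_integral_cmult_indicator)
    also have "\<dots> = ennreal (1/2 * prob B)" by (subst ennreal_mult) (auto simp: emeasure_eq_measure)
    also have "\<dots> \<le> ennreal (h l j)" using pB True by (intro ennreal_leI) (simp add: h_def)
    finally show ?thesis .
  next
    case False
    then show ?thesis by (simp add: g_def h_def)
  qed
  have "(\<integral>\<^sup>+\<omega>. ennreal (Yv Nb L N \<alpha> k \<omega>) \<partial>P) = (\<integral>\<^sup>+\<omega>. (\<Sum>l\<in>{1..L}. \<Sum>j\<in>{L+1..N}. ennreal (g l j \<omega>)) \<partial>P)"
    unfolding YY by (simp add: g0 sum_nonneg)
  also have "\<dots> = (\<Sum>l\<in>{1..L}. \<Sum>j\<in>{L+1..N}. (\<integral>\<^sup>+\<omega>. ennreal (g l j \<omega>) \<partial>P))"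
  proof -
    have m: "(\<lambda>\<omega>. ennreal (g l j \<omega>)) \<in> borel_measurable P" if "l \<in> {1..L}" for l j
    proof -
      have [measurable]: "g l j \<in> borel_measurable P" by (rule gm[OF that])
      show ?thesis by measurable
    qed
    have "(\<integral>\<^sup>+\<omega>. (\<Sum>l\<in>{1..L}. \<Sum>j\<in>{L+1..N}. ennreal (g l j \<omega>)) \<partial>P)
        = (\<Sum>l\<in>{1..L}. (\<integral>\<^sup>+\<omega>. (\<Sum>j\<in>{L+1..N}. ennreal (g l j \<omega>)) \<partial>P))"
      by (rule nn_integral_sum) (use m in \<open>auto intro!: borel_measurable_sum\<close>)
    also have "\<dots> = (\<Sum>l\<in>{1..L}. \<Sum>j\<in>{L+1..N}. (\<integral>\<^sup>+\<omega>. ennreal (g l j \<omega>) \<partial>P))"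
      by (intro sum.cong refl nn_integral_sum) (use m in auto)
    finally show ?thesis .
  qed
  also have "\<dots> \<le> (\<Sum>l\<in>{1..L}. \<Sum>j\<in>{L+1..N}. ennreal (h l j))"
    using gi by (intro sum_mono) auto
  also have "\<dots> = ennreal (\<Sum>l\<in>{1..L}. \<Sum>j\<in>{L+1..N}. h l j)"
    by (simp add: h_def e_def sum_nonneg)
  also have "\<dots> \<le> ennreal (real L * real (min (dM Nb L) (N - L)) / 2 * e)"
  proof (intro ennreal_leI)
    have "(\<Sum>j\<in>{L+1..N}. h l j) \<le> real (min (dM Nb L) (N - L)) * (e / 2)" if l: "l \<in> {1..L}" for l
    proof -
      have "(\<Sum>j\<in>{L+1..N}. h l j) = (\<Sum>j\<in>{L+1..N} \<inter> Nb l. e / 2)"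
        unfolding h_def by (rule sum.inter_restrict[symmetric]) simp
      also have "\<dots> = real (card ({L+1..N} \<inter> Nb l)) * (e / 2)" by simp
      also have "\<dots> \<le> real (min (dM Nb L) (N - L)) * (e / 2)"
      proof (intro mult_right_mono)
        have finN: "finite (Nb l)" using Nb l LN by (meson atLeastAtMost_iff finite_atLeastAtMost finite_subset le_trans)
        have "card ({L+1..N} \<inter> Nb l) \<le> card (Nb l)" using finN by (intro card_mono) auto
        also have "card (Nb l) \<le> dM Nb L" unfolding dM_def using l by (intro Max_ge) auto
        finally have a1: "card ({L+1..N} \<inter> Nb l) \<le> dM Nb L" .
        have "card ({L+1..N} \<inter> Nb l) \<le> card {L+1..N}" by (intro card_mono) auto
        hence a2: "card ({L+1..N} \<inter> Nb l) \<le> N - L" by simp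
        show "real (card ({L+1..N} \<inter> Nb l)) \<le> real (min (dM Nb L) (N - L))" using a1 a2 by simp
        show "0 \<le> e / 2" by (simp add: e_def)
      qed
      finally show ?thesis .
    qed
    hence "(\<Sum>l\<in>{1..L}. \<Sum>j\<in>{L+1..N}. h l j) \<le> (\<Sum>l\<in>{1..L}. real (min (dM Nb L) (N - L)) * (e / 2))"
      by (intro sum_mono) auto
    also have "\<dots> = real L * real (min (dM Nb L) (N - L)) / 2 * e" by simp
    finally show "(\<Sum>l\<in>{1..L}. \<Sum>j\<in>{L+1..N}. h l j) \<le> real L * real (min (dM Nb L) (N - L)) / 2 * e" .
  qed
  finally show "(\<integral>\<^sup>+\<omega>. ennreal (Yv Nb L N \<alpha> k \<omega>) \<partial>P) \<le>
          ennreal (real L * real (min (dM Nb L) (N - L)) / 2 * exp (- 2 * EM\<^sup>2 * real (Suc k)))"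
    unfolding e_def .
qed


lemma limsup_bound:
  fixes e f g :: "nat \<Rightarrow> real"
  assumes f0: "\<And>k. 0 \<le> f k" and g0: "\<And>k. 0 \<le> g k" and gf: "\<And>k. g k \<le> K * f k"
  and eb: "\<And>t. e (Suc t) \<le> \<eta> * ((\<Sum>k<t. f k) + g t)" and \<eta>: "\<eta> > 0"
  and lt: "ereal \<epsilon> < limsup (\<lambda>t. ereal (e t))"
  shows "ennreal \<epsilon> \<le> ennreal \<eta> * (\<Sum>k. ennreal (f k))"
proof (cases "summable f")
  case False
  then have "(\<Sum>k. ennreal (f k)) = top" using summable_suminf_not_top[of f] f0 by blast
  then show ?thesis using \<eta> by (simp add: ennreal_mult_top)
next
  case True
  define s where "s = suminf f"
  have "(\<Sum>k. ennreal (f k)) = ennreal s"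
    unfolding s_def by (rule suminf_ennreal_eq[OF f0 summable_sums[OF True]])
  moreover have "\<epsilon> \<le> \<eta> * s"
  proof (rule ccontr)
    assume "\<not> \<epsilon> \<le> \<eta> * s"
    hence lt2: "\<eta> * s < \<epsilon>" by simp
    have "f \<longlonglongrightarrow> 0" using True summable_LIMSEQ_zero by blast
    hence "(\<lambda>k. K * f k) \<longlonglongrightarrow> 0" using tendsto_mult_right_zero by blast
    hence g: "g \<longlonglongrightarrow> 0" using g0 gf by (intro tendsto_sandwich[of "\<lambda>_. 0" g _ "\<lambda>k. K * f k"]) auto
    have "(\<lambda>t. ereal (\<eta> * (s + g t))) \<longlonglongrightarrow> ereal (\<eta> * (s + 0))"
      by (intro tendsto_intros g)
    hence lim: "limsup (\<lambda>t. ereal (\<eta> * (s + g t))) = ereal (\<eta> * s)"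
      by (simp add: lim_imp_Limsup)
    have "\<And>t. e (Suc t) \<le> \<eta> * (s + g t)"
    proof -
      fix t
      have "(\<Sum>k<t. f k) \<le> s" unfolding s_def using True f0 by (intro sum_le_suminf) auto
      thus "e (Suc t) \<le> \<eta> * (s + g t)" using eb[of t] mult_left_mono[of "(\<Sum>k<t. f k) + g t" "s + g t" \<eta>] \<eta> by linarith
    qed
    hence "limsup (\<lambda>t. ereal (e (t+1))) \<le> limsup (\<lambda>t. ereal (\<eta> * (s + g t)))"
      by (intro Limsup_mono) auto
    hence "limsup (\<lambda>t. ereal (e t)) \<le> ereal (\<eta> * s)"
      using lim limsup_shift[of "\<lambda>t. ereal (e t)"] by simp
    hence "ereal \<epsilon> < ereal (\<eta> * s)" using lt by (metis less_le_trans)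
    thus False using lt2 by simp
  qed
  ultimately show ?thesis using \<eta> by (simp add: ennreal_mult'[symmetric] ennreal_leI)
qed



lemma geom_sum_xi:
  fixes EM c \<gamma> :: real
  assumes "EM \<noteq> 0" "\<gamma> > 0"
  shows "(\<lambda>k. (1 - lam c \<gamma> k) * (1 - lam c \<gamma> (Suc k)) * exp (- 2 * EM\<^sup>2 * real (Suc k))) sums xi c \<gamma> EM"
proof -
  define u where "u = exp (2 * EM\<^sup>2)"
  define v where "v = exp (- \<gamma>)"
  have u: "u > 1" using assms by (simp add: u_def)
  have v: "0 < v" "v < 1" using assms by (auto simp: v_def)
  have vv: "exp (- 2 * \<gamma>) = v^2" unfolding v_def by (simp add: exp_of_nat_mult[symmetric] power2_eq_square exp_add[symmetric])
  have q: "norm (1/u) < 1" "norm (v/u) < 1" "norm (v^2/u) < 1"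
    using u v by (auto simp: power_less_one_iff abs_of_pos) (smt (verit) mult_less_cancel_left2 power2_eq_square)
  have s1: "(\<lambda>k. (1/u) * (1/u)^k) sums ((1/u) * (1 / (1 - 1/u)))" by (rule sums_mult[OF geometric_sums[OF q(1)]])
  have s2: "(\<lambda>k. (- c * (1 + v) / u) * (v/u)^k) sums ((- c * (1 + v) / u) * (1 / (1 - v/u)))"
    by (rule sums_mult[OF geometric_sums[OF q(2)]])
  have s3: "(\<lambda>k. (c\<^sup>2 * v / u) * (v^2/u)^k) sums ((c\<^sup>2 * v / u) * (1 / (1 - v^2/u)))"
    by (rule sums_mult[OF geometric_sums[OF q(3)]])
  have S: "(\<lambda>k. (1/u) * (1/u)^k + (- c * (1 + v) / u) * (v/u)^k + (c\<^sup>2 * v / u) * (v^2/u)^k)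
     sums ((1/u) * (1 / (1 - 1/u)) + (- c * (1 + v) / u) * (1 / (1 - v/u)) + (c\<^sup>2 * v / u) * (1 / (1 - v^2/u)))"
    by (intro sums_add s1 s2 s3)
  have d1: "u - 1 \<noteq> 0" "u - v \<noteq> 0" "u - v^2 \<noteq> 0" using u v
    by auto (smt (verit) mult_less_cancel_left2 power2_eq_square)+
  have X: "xi c \<gamma> EM = (1/u) * (1 / (1 - 1/u)) + (- c * (1 + v) / u) * (1 / (1 - v/u)) + (c\<^sup>2 * v / u) * (1 / (1 - v^2/u))"
  proof -
    have "xi c \<gamma> EM = 1 / (u - 1) - c * (1 + v) / (u - v) + c\<^sup>2 * v / (u - v^2)"
      unfolding xi_def u_def[symmetric] v_def[symmetric] vv by simp
    also have "\<dots> = (1/u) * (1 / (1 - 1/u)) + (- c * (1 + v) / u) * (1 / (1 - v/u)) + (c\<^sup>2 * v / u) * (1 / (1 - v^2/u))"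
      using u d1 by (simp add: divide_simps)
    finally show ?thesis .
  qed
  have T: "(1 - lam c \<gamma> k) * (1 - lam c \<gamma> (Suc k)) * exp (- 2 * EM\<^sup>2 * real (Suc k))
     = (1/u) * (1/u)^k + (- c * (1 + v) / u) * (v/u)^k + (c\<^sup>2 * v / u) * (v^2/u)^k" for k
  proof -
    have l: "lam c \<gamma> n = c * v^n" for n
      unfolding lam_def v_def by (simp add: exp_of_nat_mult[symmetric] mult.commute)
    have ee: "exp (- 2 * EM\<^sup>2 * real (Suc k)) = (1/u)^(Suc k)"
    proof -
      have "exp (- 2 * EM\<^sup>2 * real (Suc k)) = exp (- (2 * EM\<^sup>2)) ^ (Suc k)"
        by (subst exp_of_nat_mult[symmetric]) (simp add: mult.commute)
      thus ?thesis by (simp add: u_def exp_minus inverse_eq_divide)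
    qed
    show ?thesis unfolding l ee using u
      by (simp add: power_divide power_mult_distrib field_simps power2_eq_square flip: power_mult)
  qed
  show ?thesis unfolding X T using S .
qed


theorem mainTheorem3:
  fixes P :: "'a measure" and Nb :: "nat \<Rightarrow> nat set" and L N :: nat
    and \<alpha> :: "nat \<Rightarrow> nat \<Rightarrow> nat \<Rightarrow> 'a \<Rightarrow> real"
    and xM :: "nat \<Rightarrow> nat \<Rightarrow> 'a \<Rightarrow> real" and x0 :: "nat \<Rightarrow> real"
    and \<eta> c \<gamma> EL EM \<epsilon> :: real and i :: nat
  assumes "prob_space P"
    and "L \<le> N"
    and "\<forall>k\<in>{1..N}. Nb k \<subseteq> {1..N} \<and> k \<notin> Nb k"
    and "dM Nb L < N"
    and "\<forall>k\<in>{1..L}. \<forall>j\<in>Nb k. \<forall>t. \<forall>\<omega>\<in>space P. 0 \<le> \<alpha> k j t \<omega> \<and> \<alpha> k j t \<omega> \<le> 1"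
    and "\<forall>k\<in>{1..L}. \<forall>j\<in>Nb k. \<forall>t. \<alpha> k j t \<in> borel_measurable P"
    and "\<forall>k\<in>{1..L}. \<forall>j\<in>Nb k. prob_space.indep_vars P (\<lambda>_. borel) (\<lambda>t. \<alpha> k j t) UNIV"
    and "\<forall>k\<in>{1..L}. \<forall>j\<in>Nb k. \<forall>t. j \<le> L \<longrightarrow> integral\<^sup>L P (\<alpha> k j t) - 1/2 = EL"
    and "\<forall>k\<in>{1..L}. \<forall>j\<in>Nb k. \<forall>t. L < j \<longrightarrow> integral\<^sup>L P (\<alpha> k j t) - 1/2 = EM"
    and "EL > 0" and "EM < 0"
    and "0 < c" and "c < 1" and "\<gamma> > 0"
    and "\<forall>j\<in>{L+1..N}. \<forall>t. xM j t \<in> borel_measurable P"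
    and "\<forall>k\<in>{1..N}. \<forall>t. \<forall>\<omega>\<in>space P. \<bar>state Nb L \<alpha> xM x0 c \<gamma> k t \<omega>\<bar> \<le> \<eta>"
    and "i \<in> {1..L}" and "\<epsilon> > 0"
  shows "measure P {\<omega> \<in> space P.
            limsup (\<lambda>t. ereal (eM Nb L N \<alpha> xM c \<gamma> i t \<omega>)) > ereal \<epsilon>}
         \<le> \<eta> * uM Nb L N c \<gamma> EM \<epsilon>"
proof -
  interpret ps: prob_space P by (rule assms(1))
  have LN: "L \<le> N" by (rule assms(2))
  have finN: "\<forall>l\<in>{1..L}. finite (Nb l)"
    using assms(3) LN by (meson atLeastAtMost_iff finite_atLeastAtMost finite_subset le_trans)
  obtain \<omega>0 where \<omega>0: "\<omega>0 \<in> space P" using ps.not_empty by blast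
  have iN: "i \<in> {1..N}" using assms(17) LN by auto
  have \<eta>0: "0 \<le> \<eta>" using assms(16) iN \<omega>0 by (meson abs_ge_zero order.trans)
  have xb: "\<forall>j\<in>{L+1..N}. \<forall>k. \<bar>xM j k \<omega>\<bar> \<le> \<eta>" if "\<omega> \<in> space P" for \<omega>
  proof (intro ballI allI)
    fix j k assume j: "j \<in> {L+1..N}"
    have "\<bar>state Nb L \<alpha> xM x0 c \<gamma> j k \<omega>\<bar> \<le> \<eta>" using assms(16) that j by auto
    thus "\<bar>xM j k \<omega>\<bar> \<le> \<eta>" using j by (simp add: state_def)
  qed
  have c: "0 < c" "c < 1" using assms by auto
  have \<gamma>: "0 \<le> \<gamma>" using assms by auto
  have detb: "eM Nb L N \<alpha> xM c \<gamma> i (Suc t) \<omega> \<le>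
     \<eta> * ((\<Sum>k<t. (1 - lam c \<gamma> k) * (1 - lam c \<gamma> (Suc k)) * Yv Nb L N \<alpha> k \<omega>) + Yv Nb L N \<alpha> t \<omega>)"
    if "\<omega> \<in> space P" for \<omega> t
    by (rule det_bound[where \<alpha>=\<alpha> and t=t and Nb=Nb and L=L and N=N and xM=xM and \<omega>=\<omega> and \<eta>=\<eta> and c=c and \<gamma>=\<gamma> and i=i, OF finN c \<gamma> xb[OF that] \<eta>0 assms(17)])
  have Y0: "0 \<le> Yv Nb L N \<alpha> k \<omega>" for k \<omega> unfolding Yv_def by (intro sum_nonneg) auto
  note lb = lam_bounds[OF c \<gamma>]
  have l1: "1 - c \<le> 1 - lam c \<gamma> s" "1 - lam c \<gamma> s \<le> 1" for s using lb[of s] by auto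
  have a0: "(1 - c)\<^sup>2 \<le> (1 - lam c \<gamma> k) * (1 - lam c \<gamma> (Suc k))" for k
    unfolding power2_eq_square using l1[of k] l1[of "Suc k"] lb[of k] c by (intro mult_mono) auto
  have a00: "0 \<le> (1 - lam c \<gamma> k) * (1 - lam c \<gamma> (Suc k))" for k
    using a0[of k] by (meson order.trans zero_le_power2)
  define E where "E = {\<omega> \<in> space P. limsup (\<lambda>t. ereal (eM Nb L N \<alpha> xM c \<gamma> i t \<omega>)) > ereal \<epsilon>}"
  define ex where "ex k = exp (- 2 * EM\<^sup>2 * real (Suc k))" for k
  have geo: "(\<lambda>k. (1 - lam c \<gamma> k) * (1 - lam c \<gamma> (Suc k)) * ex k) sums xi c \<gamma> EM"
    unfolding ex_def using assms by (intro geom_sum_xi) auto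
  have xi0: "0 \<le> xi c \<gamma> EM"
  proof -
    have "0 \<le> suminf (\<lambda>k. (1 - lam c \<gamma> k) * (1 - lam c \<gamma> (Suc k)) * ex k)"
      by (rule suminf_nonneg[OF sums_summable[OF geo]]) (simp add: ex_def mult_nonneg_nonneg[OF a00])
    thus ?thesis using sums_unique[OF geo] by simp
  qed
  have uM0: "0 \<le> uM Nb L N c \<gamma> EM \<epsilon>" unfolding uM_def using xi0 assms(18) by simp
  show ?thesis
  proof (cases "\<eta> = 0")
    case True
    have "E = {}"
    proof (rule ccontr)
      assume "E \<noteq> {}"
      then obtain \<omega> where \<omega>: "\<omega> \<in> space P" "ereal \<epsilon> < limsup (\<lambda>t. ereal (eM Nb L N \<alpha> xM c \<gamma> i t \<omega>))"
        unfolding E_def by auto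
      have "limsup (\<lambda>t. ereal (eM Nb L N \<alpha> xM c \<gamma> i (t+1) \<omega>)) \<le> limsup (\<lambda>t. ereal 0)"
        using detb[OF \<omega>(1)] True by (intro Limsup_mono) auto
      hence "limsup (\<lambda>t. ereal (eM Nb L N \<alpha> xM c \<gamma> i t \<omega>)) \<le> 0"
        using limsup_shift[of "\<lambda>t. ereal (eM Nb L N \<alpha> xM c \<gamma> i t \<omega>)"] by (simp add: Limsup_const zero_ereal_def)
      hence "ereal \<epsilon> < ereal 0" using \<omega>(2) by (metis less_le_trans zero_ereal_def)
      thus False using assms(18) by simp
    qed
    thus ?thesis using True unfolding E_def[symmetric] by simp
  next
    case False
    hence \<eta>: "\<eta> > 0" using \<eta>0 by simp
    define C where "C = real L * real (min (dM Nb L) (N - L)) / 2"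
    have C0: "0 \<le> C" unfolding C_def by simp
    have Ym: "Yv Nb L N \<alpha> k \<in> borel_measurable P" for k
      by (rule Y_integral(1)[OF assms(1,3,2,5,6,7,9,11)])
    have Yi: "(\<integral>\<^sup>+\<omega>. ennreal (Yv Nb L N \<alpha> k \<omega>) \<partial>P) \<le> ennreal (C * ex k)" for k
      unfolding C_def ex_def by (rule Y_integral(2)[OF assms(1,3,2,5,6,7,9,11)])
    define F where "F \<omega> = (\<Sum>k. ennreal ((1 - lam c \<gamma> k) * (1 - lam c \<gamma> (Suc k)) * Yv Nb L N \<alpha> k \<omega>))" for \<omega>
    have Fm_k: "(\<lambda>\<omega>. ennreal ((1 - lam c \<gamma> k) * (1 - lam c \<gamma> (Suc k)) * Yv Nb L N \<alpha> k \<omega>)) \<in> borel_measurable P" for k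
    proof -
      have [measurable]: "Yv Nb L N \<alpha> k \<in> borel_measurable P" by (rule Ym)
      show ?thesis by measurable
    qed
    have Fm: "F \<in> borel_measurable P"
    proof -
      have [measurable]: "(\<lambda>\<omega>. ennreal ((1 - lam c \<gamma> k) * (1 - lam c \<gamma> (Suc k)) * Yv Nb L N \<alpha> k \<omega>)) \<in> borel_measurable P" for k
        by (rule Fm_k)
      show ?thesis unfolding F_def[abs_def] by measurable
    qed
    define E' where "E' = {\<omega> \<in> space P. 1 \<le> ennreal (\<eta> / \<epsilon>) * F \<omega>}"
    have E's: "E' \<in> sets P"
    proof -
      have [measurable]: "F \<in> borel_measurable P" by (rule Fm)
      show ?thesis unfolding E'_def by measurable
    qed
    have sub: "E \<subseteq> E'"
    proof
      fix \<omega> assume "\<omega> \<in> E"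
      hence \<omega>: "\<omega> \<in> space P" "ereal \<epsilon> < limsup (\<lambda>t. ereal (eM Nb L N \<alpha> xM c \<gamma> i t \<omega>))"
        unfolding E_def by auto
      have "ennreal \<epsilon> \<le> ennreal \<eta> * F \<omega>"
        unfolding F_def
      proof (rule limsup_bound[where g = "\<lambda>t. Yv Nb L N \<alpha> t \<omega>" and K = "1 / (1 - c)\<^sup>2"])
        show "0 \<le> (1 - lam c \<gamma> k) * (1 - lam c \<gamma> (Suc k)) * Yv Nb L N \<alpha> k \<omega>" for k
          by (rule mult_nonneg_nonneg[OF a00 Y0])
        show "0 \<le> Yv Nb L N \<alpha> k \<omega>" for k by (rule Y0)
        show "Yv Nb L N \<alpha> k \<omega> \<le> 1 / (1 - c)\<^sup>2 * ((1 - lam c \<gamma> k) * (1 - lam c \<gamma> (Suc k)) * Yv Nb L N \<alpha> k \<omega>)" for k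
        proof -
          have pc: "0 < (1 - c)\<^sup>2" using c by simp
          have "1 \<le> 1 / (1 - c)\<^sup>2 * ((1 - lam c \<gamma> k) * (1 - lam c \<gamma> (Suc k)))"
            using a0[of k] pc by (simp add: field_simps)
          from mult_right_mono[OF this Y0[of k \<omega>]] show ?thesis by (simp add: mult_ac)
        qed
        show "eM Nb L N \<alpha> xM c \<gamma> i (Suc t) \<omega> \<le> \<eta> * ((\<Sum>k<t. (1 - lam c \<gamma> k) * (1 - lam c \<gamma> (Suc k)) * Yv Nb L N \<alpha> k \<omega>) + Yv Nb L N \<alpha> t \<omega>)" for t
          by (rule detb[OF \<omega>(1)])
        show "0 < \<eta>" by (rule \<eta>)
        show "ereal \<epsilon> < limsup (\<lambda>t. ereal (eM Nb L N \<alpha> xM c \<gamma> i t \<omega>))" by (rule \<omega>(2))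
      qed
      hence "ennreal (1/\<epsilon>) * ennreal \<epsilon> \<le> ennreal (1/\<epsilon>) * (ennreal \<eta> * F \<omega>)"
        by (rule mult_left_mono) simp
      moreover have "ennreal (1/\<epsilon>) * ennreal \<epsilon> = 1"
        using assms(18) by (subst ennreal_mult[symmetric]) auto
      moreover have "ennreal (1/\<epsilon>) * (ennreal \<eta> * F \<omega>) = ennreal (\<eta> / \<epsilon>) * F \<omega>"
        using assms(18) \<eta> by (subst mult.assoc[symmetric], subst ennreal_mult[symmetric]) auto
      ultimately show "\<omega> \<in> E'" unfolding E'_def using \<omega>(1) by simp
    qed
    have "emeasure P E' \<le> ennreal (\<eta> / \<epsilon>) * (\<integral>\<^sup>+\<omega>. F \<omega> * indicator (space P) \<omega> \<partial>P)"
      unfolding E'_def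
    proof (rule nn_integral_Markov_inequality)
      have [measurable]: "F \<in> borel_measurable P" by (rule Fm)
      show "(\<lambda>x. F x * indicator (space P) x) \<in> borel_measurable P" by measurable
    qed simp
    also have "(\<integral>\<^sup>+\<omega>. F \<omega> * indicator (space P) \<omega> \<partial>P) = (\<integral>\<^sup>+\<omega>. F \<omega> \<partial>P)"
      by (intro nn_integral_cong) simp
    also have "\<dots> = (\<Sum>k. \<integral>\<^sup>+\<omega>. ennreal ((1 - lam c \<gamma> k) * (1 - lam c \<gamma> (Suc k)) * Yv Nb L N \<alpha> k \<omega>) \<partial>P)"
      unfolding F_def by (rule nn_integral_suminf[OF Fm_k])
    also have "\<dots> \<le> (\<Sum>k. ennreal (C * ((1 - lam c \<gamma> k) * (1 - lam c \<gamma> (Suc k)) * ex k)))"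
    proof (rule suminf_le[OF _ summableI summableI])
      fix k
      have "(\<integral>\<^sup>+\<omega>. ennreal ((1 - lam c \<gamma> k) * (1 - lam c \<gamma> (Suc k)) * Yv Nb L N \<alpha> k \<omega>) \<partial>P)
          = (\<integral>\<^sup>+\<omega>. ennreal ((1 - lam c \<gamma> k) * (1 - lam c \<gamma> (Suc k))) * ennreal (Yv Nb L N \<alpha> k \<omega>) \<partial>P)"
        using a00[of k] Y0 by (intro nn_integral_cong) (simp add: ennreal_mult)
      also have "\<dots> = ennreal ((1 - lam c \<gamma> k) * (1 - lam c \<gamma> (Suc k))) * (\<integral>\<^sup>+\<omega>. ennreal (Yv Nb L N \<alpha> k \<omega>) \<partial>P)"
      proof (rule nn_integral_cmult)
        have [measurable]: "Yv Nb L N \<alpha> k \<in> borel_measurable P" by (rule Ym)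
        show "(\<lambda>\<omega>. ennreal (Yv Nb L N \<alpha> k \<omega>)) \<in> borel_measurable P" by measurable
      qed
      also have "\<dots> \<le> ennreal ((1 - lam c \<gamma> k) * (1 - lam c \<gamma> (Suc k))) * ennreal (C * ex k)"
        by (rule mult_left_mono[OF Yi]) simp
      also have "\<dots> = ennreal (C * ((1 - lam c \<gamma> k) * (1 - lam c \<gamma> (Suc k)) * ex k))"
        using a00[of k] C0 by (subst ennreal_mult[symmetric]) (auto simp: ex_def mult_ac)
      finally show "(\<integral>\<^sup>+\<omega>. ennreal ((1 - lam c \<gamma> k) * (1 - lam c \<gamma> (Suc k)) * Yv Nb L N \<alpha> k \<omega>) \<partial>P)
          \<le> ennreal (C * ((1 - lam c \<gamma> k) * (1 - lam c \<gamma> (Suc k)) * ex k))" .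
    qed
    also have "(\<Sum>k. ennreal (C * ((1 - lam c \<gamma> k) * (1 - lam c \<gamma> (Suc k)) * ex k))) = ennreal (C * xi c \<gamma> EM)"
      using a00 C0 by (intro suminf_ennreal_eq sums_mult geo) (auto simp: ex_def)
    finally have "emeasure P E' \<le> ennreal (\<eta> / \<epsilon>) * ennreal (C * xi c \<gamma> EM)"
      by (simp add: mult_left_mono)
    also have "\<dots> = ennreal (\<eta> * uM Nb L N c \<gamma> EM \<epsilon>)"
    proof -
      have "\<eta> / \<epsilon> * (C * xi c \<gamma> EM) = \<eta> * uM Nb L N c \<gamma> EM \<epsilon>"
        unfolding uM_def C_def using assms(18) by (simp add: field_simps)
      thus ?thesis using \<eta> assms(18) C0 xi0 by (subst ennreal_mult[symmetric]) auto
    qed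
    finally have "emeasure P E \<le> ennreal (\<eta> * uM Nb L N c \<gamma> EM \<epsilon>)"
      using emeasure_mono[OF sub E's] by (meson order.trans)
    hence "measure P E \<le> \<eta> * uM Nb L N c \<gamma> EM \<epsilon>"
      unfolding measure_def using \<eta>0 uM0 by (intro enn2real_leI) auto
    thus ?thesis unfolding E_def .
  qed
qed

end
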